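(* Let $G=(V,E)$ be an $n$-vertex graph with nonnegative interactions $J$, let $\mu$ be the associated zero-field Ising measure, and let $F\subset V$ be a subset of size $\lfloor \sqrt n/\log n\rfloor$ satisfying $\sum_{u,v\in F,u\ne v}\mathrm{Cov}_\mu(\sigma(u),\sigma(v))\le 2/\log n$. Let $(Z_t^{(+)})$ be the chain $(Z_t)$ on $\{-1,1\}^F$ started from the all-plus configuration, and $\mathcal S_t=\sum_{v\in F}Z_t^{(+)}(v)$. Then for all $t\ge0$, $$\mathbb E_+(\mathcal S_t)\ge|F|\Big(1-\frac1{|F|}\Big)^t.$$
   Context: The Ising measure is $\mu(\sigma)=Z^{-1}\exp(\sum_{uv\in E}J_{uv}\sigma(u)\sigma(v))$ on $\{\pm1\}^V$, $J_{uv}\ge0$. The chain $(Z_t)$ on $\{-1,1\}^F$: at each step a vertex $v\in F$ is chosen uniformly at random and $Z(v)$ is resampled from the conditional law of $\sigma(v)$ under $\mu$ given the spins on $F\setminus\{v\}$ (spins outside $F$ are integrated out). Its stationary law $\nu_F$ is the marginal of $\mu$ on $F$. *)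

theory Defs
  imports Complex_Main "HOL-Library.FuncSet"
begin

definition configs :: "'a set \<Rightarrow> ('a \<Rightarrow> real) set" where
  "configs A = PiE A (\<lambda>_. {-1, 1})"

text \<open>Unnormalised Ising weight; E is a set of edges (2-element subsets of V),
  J the interaction on edges: exp (sum over uv in E of J_uv sigma(u) sigma(v)).\<close>
definition ising_weight :: "'a set set \<Rightarrow> ('a set \<Rightarrow> real) \<Rightarrow> ('a \<Rightarrow> real) \<Rightarrow> real" where
  "ising_weight E J \<sigma> = exp (\<Sum>e\<in>E. J e * (\<Prod>v\<in>e. \<sigma> v))"

definition partition_fn :: "'a set \<Rightarrow> 'a set set \<Rightarrow> ('a set \<Rightarrow> real) \<Rightarrow> real" where
  "partition_fn V E J = (\<Sum>\<sigma>\<in>configs V. ising_weight E J \<sigma>)"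

definition ising :: "'a set \<Rightarrow> 'a set set \<Rightarrow> ('a set \<Rightarrow> real) \<Rightarrow> ('a \<Rightarrow> real) \<Rightarrow> real" where
  "ising V E J \<sigma> = ising_weight E J \<sigma> / partition_fn V E J"

definition ising_exp :: "'a set \<Rightarrow> 'a set set \<Rightarrow> ('a set \<Rightarrow> real) \<Rightarrow> (('a \<Rightarrow> real) \<Rightarrow> real) \<Rightarrow> real" where
  "ising_exp V E J f = (\<Sum>\<sigma>\<in>configs V. ising V E J \<sigma> * f \<sigma>)"

definition ising_cov :: "'a set \<Rightarrow> 'a set set \<Rightarrow> ('a set \<Rightarrow> real) \<Rightarrow> 'a \<Rightarrow> 'a \<Rightarrow> real" where
  "ising_cov V E J u v =
     ising_exp V E J (\<lambda>\<sigma>. \<sigma> u * \<sigma> v)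
     - ising_exp V E J (\<lambda>\<sigma>. \<sigma> u) * ising_exp V E J (\<lambda>\<sigma>. \<sigma> v)"

definition marginal :: "'a set \<Rightarrow> 'a set set \<Rightarrow> ('a set \<Rightarrow> real) \<Rightarrow> 'a set \<Rightarrow> ('a \<Rightarrow> real) \<Rightarrow> real" where
  "marginal V E J F \<tau> = (\<Sum>\<sigma>\<in>{\<sigma>\<in>configs V. restrict \<sigma> F = \<tau>}. ising V E J \<sigma>)"

text \<open>Transition kernel of the chain Z_t on {-1,1}^F: pick v in F uniformly, resample Z(v)
  from the conditional law of sigma(v) under nu_F given the spins on F - {v}.\<close>
definition chain_kernel :: "'a set \<Rightarrow> 'a set set \<Rightarrow> ('a set \<Rightarrow> real) \<Rightarrow> 'a set
    \<Rightarrow> ('a \<Rightarrow> real) \<Rightarrow> ('a \<Rightarrow> real) \<Rightarrow> real" where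
  "chain_kernel V E J F \<tau> \<tau>' =
     (1 / real (card F)) * (\<Sum>v\<in>F.
        if (\<forall>u\<in>F - {v}. \<tau>' u = \<tau> u)
        then marginal V E J F \<tau>' /
             (marginal V E J F (\<tau>(v := 1)) + marginal V E J F (\<tau>(v := -1)))
        else 0)"

primrec chain_law :: "'a set \<Rightarrow> 'a set set \<Rightarrow> ('a set \<Rightarrow> real) \<Rightarrow> 'a set
    \<Rightarrow> nat \<Rightarrow> ('a \<Rightarrow> real) \<Rightarrow> real" where
  "chain_law V E J F 0 \<tau> = (if \<tau> = restrict (\<lambda>_. 1) F then 1 else 0)"
| "chain_law V E J F (Suc t) \<tau>' =
     (\<Sum>\<tau>\<in>configs F. chain_law V E J F t \<tau> * chain_kernel V E J F \<tau> \<tau>')"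

definition exp_mag_plus :: "'a set \<Rightarrow> 'a set set \<Rightarrow> ('a set \<Rightarrow> real) \<Rightarrow> 'a set \<Rightarrow> nat \<Rightarrow> real" where
  "exp_mag_plus V E J F t = (\<Sum>\<tau>\<in>configs F. chain_law V E J F t \<tau> * (\<Sum>v\<in>F. \<tau> v))"

end

theory Submission
  imports Defs
begin


definition maxf :: "('a \<Rightarrow> real) \<Rightarrow> ('a \<Rightarrow> real) \<Rightarrow> 'a \<Rightarrow> real" where
  "maxf x y = (\<lambda>i. max (x i) (y i))"
definition minf :: "('a \<Rightarrow> real) \<Rightarrow> ('a \<Rightarrow> real) \<Rightarrow> 'a \<Rightarrow> real" where
  "minf x y = (\<lambda>i. min (x i) (y i))"

lemma sum_configs_insert:
  assumes "a \<notin> A"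
  shows "(\<Sum>\<sigma>\<in>configs (insert a A). f \<sigma>) = (\<Sum>\<eta>\<in>configs A. f (\<eta>(a:=-1)) + f (\<eta>(a:=1)))"
proof -
  have "(\<Sum>\<sigma>\<in>configs (insert a A). f \<sigma>) = (\<Sum>p\<in>{-1,1::real} \<times> configs A. f ((\<lambda>(y, g). g(a := y)) p))"
    unfolding configs_def PiE_insert_eq
    by (subst sum.reindex) (use inj_combinator[OF assms, of "\<lambda>_. {-1,1::real}"] in auto)
  also have "\<dots> = (\<Sum>y\<in>{-1,1::real}. \<Sum>\<eta>\<in>configs A. f (\<eta>(a:=y)))"
    using sum.cartesian_product[where g="\<lambda>y g. f (g(a:=y))" and A="{-1,1::real}" and B="configs A"]
    by (simp add: case_prod_unfold)
  also have "\<dots> = (\<Sum>\<eta>\<in>configs A. f (\<eta>(a:=-1)) + f (\<eta>(a:=1)))"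
    by (simp add: sum.distrib)
  finally show ?thesis .
qed

lemma one_dim:
  fixes a0 a1 b0 b1 c0 c1 d0 d1 :: real
  assumes "a0 \<ge> 0" "a1 \<ge> 0" "b0 \<ge> 0" "b1 \<ge> 0" "c0 \<ge> 0" "c1 \<ge> 0" "d0 \<ge> 0" "d1 \<ge> 0"
    and h00: "a0*b0 \<le> c0*d0" and h01: "a0*b1 \<le> c1*d0" and h10: "a1*b0 \<le> c1*d0"
    and h11: "a1*b1 \<le> c1*d1"
  shows "(a0+a1)*(b0+b1) \<le> (c0+c1)*(d0+d1)"
proof -
  define X where "X = a0*b1"
  define Y where "Y = a1*b0"
  define P where "P = c1*d0"
  define Q where "Q = c0*d1"
  have X0: "X \<ge> 0" "Y \<ge> 0" using assms by (auto simp: X_def Y_def)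
  have XP: "X \<le> P" "Y \<le> P" using h01 h10 by (auto simp: X_def Y_def P_def)
  have "X*Y = (a0*b0)*(a1*b1)" by (simp add: X_def Y_def algebra_simps)
  also have "\<dots> \<le> (c0*d0)*(c1*d1)" by (rule mult_mono[OF h00 h11]) (use assms in auto)
  also have "\<dots> = P*Q" by (simp add: P_def Q_def algebra_simps)
  finally have XY: "X*Y \<le> P*Q" .
  have "X + Y \<le> P + Q"
  proof (cases "P = 0")
    case True then show ?thesis using X0 XP Q_def assms by simp
  next
    case False
    then have Pp: "P > 0" using XP X0 by linarith
    have "(P-X)*(P-Y) \<ge> 0" using XP by simp
    then have "P*(X+Y) \<le> P*(P+Q)" using XY by (simp add: algebra_simps)
    then show ?thesis using Pp by simp
  qed
  moreover have "(a0+a1)*(b0+b1) = a0*b0 + a1*b1 + (X+Y)" by (simp add: X_def Y_def algebra_simps)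
  moreover have "(c0+c1)*(d0+d1) = c0*d0 + c1*d1 + (P+Q)" by (simp add: P_def Q_def algebra_simps)
  ultimately show ?thesis using h00 h11 by linarith
qed

lemma maxf_upd: "maxf (x(a:=i)) (y(a:=j)) = (maxf x y)(a := max i j)"
  by (auto simp: maxf_def)
lemma minf_upd: "minf (x(a:=i)) (y(a:=j)) = (minf x y)(a := min i j)"
  by (auto simp: minf_def)

lemma upd_configs: "\<eta> \<in> configs A \<Longrightarrow> s \<in> {-1,1} \<Longrightarrow> \<eta>(a:=s) \<in> configs (insert a A)"
  unfolding configs_def by (auto simp: PiE_def extensional_def Pi_def)

lemma AD:
  fixes f1 f2 f3 f4 :: "('a \<Rightarrow> real) \<Rightarrow> real"
  assumes "finite A"
  and "\<forall>x\<in>configs A. f1 x \<ge> 0 \<and> f2 x \<ge> 0 \<and> f3 x \<ge> 0 \<and> f4 x \<ge> 0"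
  and "\<forall>x\<in>configs A. \<forall>y\<in>configs A. f1 x * f2 y \<le> f3 (maxf x y) * f4 (minf x y)"
  shows "(\<Sum>x\<in>configs A. f1 x) * (\<Sum>x\<in>configs A. f2 x) \<le> (\<Sum>x\<in>configs A. f3 x) * (\<Sum>x\<in>configs A. f4 x)"
  using assms
proof (induction A arbitrary: f1 f2 f3 f4 rule: finite_induct)
  case empty
  have "maxf (\<lambda>x. undefined) (\<lambda>x. undefined) = (\<lambda>x. undefined)"
       "minf (\<lambda>x. undefined) (\<lambda>x. undefined) = (\<lambda>x. undefined)"
    by (auto simp: maxf_def minf_def)
  then show ?case using empty.prems by (simp add: configs_def maxf_def minf_def)
next
  case (insert a A)
  define g where "g f \<eta> = f (\<eta>(a:=-1)) + f (\<eta>(a:=(1::real)))" for f :: "('a \<Rightarrow> real) \<Rightarrow> real" and \<eta>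
  have S: "(\<Sum>x\<in>configs (insert a A). f x) = (\<Sum>x\<in>configs A. g f x)" for f
    unfolding g_def by (rule sum_configs_insert[OF insert.hyps(2)])
  have nn: "\<forall>x\<in>configs A. g f1 x \<ge> 0 \<and> g f2 x \<ge> 0 \<and> g f3 x \<ge> 0 \<and> g f4 x \<ge> 0"
  proof
    fix x assume x: "x \<in> configs A"
    have "x(a:=s) \<in> configs (insert a A)" if "s \<in> {-1,1}" for s using upd_configs[OF x that] .
    then show "g f1 x \<ge> 0 \<and> g f2 x \<ge> 0 \<and> g f3 x \<ge> 0 \<and> g f4 x \<ge> 0"
      using insert.prems(1) unfolding g_def by (smt (verit) insertI1 insertI2)
  qed
  have lat: "\<forall>x\<in>configs A. \<forall>y\<in>configs A. g f1 x * g f2 y \<le> g f3 (maxf x y) * g f4 (minf x y)"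
  proof (intro ballI)
    fix x y assume x: "x \<in> configs A" and y: "y \<in> configs A"
    have X: "x(a:=s) \<in> configs (insert a A)" "y(a:=s) \<in> configs (insert a A)" if "s \<in> {-1,1}" for s
      using upd_configs[OF x that] upd_configs[OF y that] by auto
    have H: "f1 (x(a:=i)) * f2 (y(a:=j)) \<le> f3 ((maxf x y)(a := max i j)) * f4 ((minf x y)(a := min i j))"
      if "i \<in> {-1,1}" "j \<in> {-1,1}" for i j
      using insert.prems(2) X[OF that(1)] X[OF that(2)] by (metis maxf_upd minf_upd)
    have mx: "(maxf x y)(a:=s) \<in> configs (insert a A)" "(minf x y)(a:=s) \<in> configs (insert a A)" if "s \<in> {-1,1}" for s
      using that x y unfolding configs_def maxf_def minf_def
      by (auto simp: PiE_def extensional_def Pi_def max_def min_def)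
    show "g f1 x * g f2 y \<le> g f3 (maxf x y) * g f4 (minf x y)"
      unfolding g_def
      apply (rule one_dim)
      using insert.prems(1) X mx apply (meson insertI1 insertI2)+
      using H[of "-1" "-1"] H[of "-1" 1] H[of 1 "-1"] H[of 1 1] by auto
  qed
  show ?case unfolding S by (rule insert.IH[OF nn lat])
qed




definition flipc :: "'a set \<Rightarrow> ('a \<Rightarrow> real) \<Rightarrow> 'a \<Rightarrow> real" where
  "flipc A \<tau> = restrict (\<lambda>i. - \<tau> i) A"

definition leF :: "'a set \<Rightarrow> ('a \<Rightarrow> real) \<Rightarrow> ('a \<Rightarrow> real) \<Rightarrow> bool" where
  "leF F \<tau> \<tau>' = (\<forall>v\<in>F. \<tau> v \<le> \<tau>' v)"

lemma real_lattice_ineq: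
  fixes a b c d :: real
  shows "a*b + c*d \<le> max a c * max b d + min a c * min b d"
proof (cases "a \<le> c"; cases "b \<le> d")
  assume "a \<le> c" "b \<le> d" then show ?thesis by simp
next
  assume "a \<le> c" "\<not> b \<le> d"
  then have "(c-a)*(b-d) \<ge> 0" by simp
  then show ?thesis using \<open>a \<le> c\<close> \<open>\<not> b \<le> d\<close> by (simp add: algebra_simps)
next
  assume "\<not> a \<le> c" "b \<le> d"
  then have "(a-c)*(d-b) \<ge> 0" by simp
  then show ?thesis using \<open>\<not> a \<le> c\<close> \<open>b \<le> d\<close> by (simp add: algebra_simps)
next
  assume "\<not> a \<le> c" "\<not> b \<le> d" then show ?thesis by simp
qed

lemma configs_finite: "finite A \<Longrightarrow> finite (configs A)"
  unfolding configs_def by (rule finite_PiE) auto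

lemma configs_val: "\<tau> \<in> configs A \<Longrightarrow> i \<in> A \<Longrightarrow> \<tau> i = -1 \<or> \<tau> i = 1"
  unfolding configs_def by auto

lemma configs_undef: "\<tau> \<in> configs A \<Longrightarrow> i \<notin> A \<Longrightarrow> \<tau> i = undefined"
  unfolding configs_def by auto

lemma configs_upd: "\<tau> \<in> configs A \<Longrightarrow> v \<in> A \<Longrightarrow> s \<in> {-1,1} \<Longrightarrow> \<tau>(v:=s) \<in> configs A"
  unfolding configs_def by (auto simp: PiE_def extensional_def Pi_def)

lemma flipc_configs: "\<tau> \<in> configs A \<Longrightarrow> flipc A \<tau> \<in> configs A"
  unfolding configs_def flipc_def by (auto simp: PiE_def extensional_def Pi_def)

lemma flipc_flipc: "\<tau> \<in> configs A \<Longrightarrow> flipc A (flipc A \<tau>) = \<tau>"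
  unfolding flipc_def by (auto simp: configs_undef)

lemma flipc_upd: "v \<in> A \<Longrightarrow> (flipc A \<tau>)(v := s) = flipc A (\<tau>(v := - s))"
  unfolding flipc_def by auto

locale isetup =
  fixes V :: "'a set" and E :: "'a set set" and J :: "'a set \<Rightarrow> real" and F :: "'a set"
  assumes finV: "finite V"
    and edges: "\<forall>e\<in>E. \<exists>u v. u \<in> V \<and> v \<in> V \<and> u \<noteq> v \<and> e = {u, v}"
    and Jnn: "\<forall>e\<in>E. J e \<ge> 0"
    and FV: "F \<subseteq> V"
begin

abbreviation "M \<equiv> marginal V E J F"

lemma finF: "finite F" using finV FV finite_subset by blast

lemma Z_pos: "partition_fn V E J > 0"
proof -
  have "restrict (\<lambda>_. 1) V \<in> configs V" unfolding configs_def by auto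
  then show ?thesis unfolding partition_fn_def ising_weight_def
    by (intro sum_pos configs_finite finV) auto
qed

lemma ising_pos: "ising V E J \<sigma> > 0"
  unfolding ising_def using Z_pos by (simp add: ising_weight_def)

lemma M_pos:
  assumes "\<tau> \<in> configs F" shows "M \<tau> > 0"
proof -
  define \<sigma>0 where "\<sigma>0 = restrict (\<lambda>i. if i \<in> F then \<tau> i else 1) V"
  have "\<sigma>0 \<in> configs V" using assms unfolding \<sigma>0_def configs_def by (auto simp: PiE_def Pi_def)
  moreover have "restrict \<sigma>0 F = \<tau>"
    using assms FV unfolding \<sigma>0_def by (intro ext) (auto simp: configs_undef restrict_def)
  ultimately have ne: "{\<sigma>\<in>configs V. restrict \<sigma> F = \<tau>} \<noteq> {}" by blast
  show ?thesis unfolding marginal_def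
    by (rule sum_pos) (use ne configs_finite[OF finV] ising_pos in auto)
qed

lemma edge_ex: "e \<in> E \<Longrightarrow> \<exists>u v. u \<in> V \<and> v \<in> V \<and> u \<noteq> v \<and> e = {u, v}"
  using edges by blast

lemma weight_flip:
  assumes "\<sigma> \<in> configs V" shows "ising V E J (flipc V \<sigma>) = ising V E J \<sigma>"
proof -
  have "(\<Prod>w\<in>e. flipc V \<sigma> w) = (\<Prod>w\<in>e. \<sigma> w)" if e: "e \<in> E" for e
  proof -
    obtain u v where "u \<in> V" "v \<in> V" "u \<noteq> v" "e = {u,v}"
      using edge_ex[OF e] by blast
    then show ?thesis by (simp add: flipc_def)
  qed
  then show ?thesis unfolding ising_def ising_weight_def by simp
qed

lemma restrict_flip: "restrict (flipc V \<sigma>) F = flipc F (restrict \<sigma> F)"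
  using FV unfolding flipc_def by (intro ext) (auto simp: restrict_def)

lemma M_flip:
  assumes "\<tau> \<in> configs F" shows "M (flipc F \<tau>) = M \<tau>"
  unfolding marginal_def
  by (rule sum.reindex_bij_witness[where i="flipc V" and j="flipc V"])
    (use assms in \<open>auto simp: flipc_flipc flipc_configs restrict_flip weight_flip\<close>)

lemma weight_lattice:
  assumes "x \<in> configs V" "y \<in> configs V"
  shows "ising V E J x * ising V E J y \<le> ising V E J (maxf x y) * ising V E J (minf x y)"
proof -
  let ?A = "\<lambda>\<sigma>. \<Sum>e\<in>E. J e * (\<Prod>v\<in>e. \<sigma> v)"
  have "?A x + ?A y \<le> ?A (maxf x y) + ?A (minf x y)"
    unfolding sum.distrib[symmetric]
  proof (rule sum_mono)
    fix e assume e: "e \<in> E"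
    obtain u v where "u \<in> V" "v \<in> V" "u \<noteq> v" "e = {u,v}"
      using edge_ex[OF e] by blast
    then have P: "\<And>\<sigma>. (\<Prod>w\<in>e. \<sigma> w) = \<sigma> u * \<sigma> v" by simp
    have "x u * x v + y u * y v \<le> max (x u) (y u) * max (x v) (y v) + min (x u) (y u) * min (x v) (y v)"
      by (rule real_lattice_ineq)
    then have "J e * (x u * x v + y u * y v) \<le> J e * (max (x u) (y u) * max (x v) (y v) + min (x u) (y u) * min (x v) (y v))"
      using Jnn e by (intro mult_left_mono) auto
    then show "J e * (\<Prod>v\<in>e. x v) + J e * (\<Prod>v\<in>e. y v) \<le> J e * (\<Prod>v\<in>e. maxf x y v) + J e * (\<Prod>v\<in>e. minf x y v)"
      by (simp add: P maxf_def minf_def algebra_simps)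
  qed
  then have W: "ising_weight E J x * ising_weight E J y \<le> ising_weight E J (maxf x y) * ising_weight E J (minf x y)"
    unfolding ising_weight_def by (simp add: exp_add[symmetric])
  have Z: "partition_fn V E J * partition_fn V E J > 0" using Z_pos by simp
  show ?thesis unfolding ising_def using divide_right_mono[OF W, of "partition_fn V E J * partition_fn V E J"] Z
    by simp
qed

end



context isetup begin

definition q :: "'a \<Rightarrow> ('a \<Rightarrow> real) \<Rightarrow> real" where
  "q v \<tau> = M (\<tau>(v:=1)) / (M (\<tau>(v:=1)) + M (\<tau>(v:=-1)))"

definition Pop :: "(('a \<Rightarrow> real) \<Rightarrow> real) \<Rightarrow> ('a \<Rightarrow> real) \<Rightarrow> real" where
  "Pop g \<tau> = (\<Sum>\<tau>'\<in>configs F. chain_kernel V E J F \<tau> \<tau>' * g \<tau>')"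

lemma Mupd_pos: "\<tau> \<in> configs F \<Longrightarrow> v \<in> F \<Longrightarrow> s \<in> {-1,1} \<Longrightarrow> M (\<tau>(v:=s)) > 0"
  by (rule M_pos[OF configs_upd])

lemma q_bounds: assumes "\<tau> \<in> configs F" "v \<in> F" shows "0 \<le> q v \<tau>" "q v \<tau> \<le> 1"
  using Mupd_pos[OF assms, of 1] Mupd_pos[OF assms, of "-1"] unfolding q_def by auto

lemma one_minus_q: assumes "\<tau> \<in> configs F" "v \<in> F"
  shows "1 - q v \<tau> = M (\<tau>(v:=-1)) / (M (\<tau>(v:=1)) + M (\<tau>(v:=-1)))"
  using Mupd_pos[OF assms, of 1] Mupd_pos[OF assms, of "-1"] unfolding q_def by (simp add: field_simps)

lemma q_flip: assumes "\<tau> \<in> configs F" "v \<in> F" shows "q v (flipc F \<tau>) = 1 - q v \<tau>"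
proof -
  have a: "(flipc F \<tau>)(v:=1) = flipc F (\<tau>(v:=-1))" "(flipc F \<tau>)(v:=-1) = flipc F (\<tau>(v:=1))"
    using flipc_upd[OF assms(2)] by auto
  have b: "M (flipc F (\<tau>(v:=s))) = M (\<tau>(v:=s))" if "s \<in> {-1,1}" for s
    using M_flip configs_upd[OF assms that] .
  have "q v (flipc F \<tau>) = M (\<tau>(v:=-1)) / (M (\<tau>(v:=1)) + M (\<tau>(v:=-1)))"
    unfolding q_def a b[of 1, simplified] b[of "-1", simplified] by (simp add: add.commute)
  with one_minus_q[OF assms] show ?thesis by simp
qed

lemma restrict_max:
  assumes x: "restrict x F = \<tau>(v:=1)" and y: "restrict y F = \<tau>'(v:=-1)"
    and le: "leF F \<tau> \<tau>'" and t: "\<tau> \<in> configs F" "\<tau>' \<in> configs F" and v: "v \<in> F"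
  shows "restrict (maxf x y) F = \<tau>'(v:=1)" "restrict (minf x y) F = \<tau>(v:=-1)"
proof -
  have xi: "x i = (\<tau>(v:=1)) i" and yi: "y i = (\<tau>'(v:=-1)) i" if "i \<in> F" for i
    using fun_cong[OF x, of i] fun_cong[OF y, of i] that by auto
  show "restrict (maxf x y) F = \<tau>'(v:=1)"
  proof (rule ext)
    fix i show "restrict (maxf x y) F i = (\<tau>'(v:=1)) i"
      using xi[of i] yi[of i] le v configs_undef[OF t(2), of i]
      by (cases "i \<in> F") (auto simp: maxf_def leF_def max_def)
  qed
  show "restrict (minf x y) F = \<tau>(v:=-1)"
  proof (rule ext)
    fix i show "restrict (minf x y) F i = (\<tau>(v:=-1)) i"
      using xi[of i] yi[of i] le v configs_undef[OF t(1), of i]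
      by (cases "i \<in> F") (auto simp: minf_def leF_def min_def)
  qed
qed

lemma M_sum: "M \<rho> = (\<Sum>\<sigma>\<in>configs V. if restrict \<sigma> F = \<rho> then ising V E J \<sigma> else 0)"
  unfolding marginal_def by (rule sum.inter_filter[OF configs_finite[OF finV]])

lemma M_key:
  assumes le: "leF F \<tau> \<tau>'" and t: "\<tau> \<in> configs F" "\<tau>' \<in> configs F" and v: "v \<in> F"
  shows "M (\<tau>(v:=1)) * M (\<tau>'(v:=-1)) \<le> M (\<tau>'(v:=1)) * M (\<tau>(v:=-1))"
  unfolding M_sum
proof (rule AD[OF finV])
  show "\<forall>x\<in>configs V. 0 \<le> (if restrict x F = \<tau>(v := 1) then ising V E J x else 0) \<and>
        0 \<le> (if restrict x F = \<tau>'(v := - 1) then ising V E J x else 0) \<and>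
        0 \<le> (if restrict x F = \<tau>'(v := 1) then ising V E J x else 0) \<and>
        0 \<le> (if restrict x F = \<tau>(v := - 1) then ising V E J x else 0)"
    using ising_pos by (simp add: less_imp_le)
  show "\<forall>x\<in>configs V. \<forall>y\<in>configs V.
       (if restrict x F = \<tau>(v := 1) then ising V E J x else 0) *
       (if restrict y F = \<tau>'(v := - 1) then ising V E J y else 0)
       \<le> (if restrict (maxf x y) F = \<tau>'(v := 1) then ising V E J (maxf x y) else 0) *
          (if restrict (minf x y) F = \<tau>(v := - 1) then ising V E J (minf x y) else 0)"
  proof (intro ballI)
    fix x y assume xy: "x \<in> configs V" "y \<in> configs V"
    show "(if restrict x F = \<tau>(v := 1) then ising V E J x else 0) *
       (if restrict y F = \<tau>'(v := - 1) then ising V E J y else 0)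
       \<le> (if restrict (maxf x y) F = \<tau>'(v := 1) then ising V E J (maxf x y) else 0) *
          (if restrict (minf x y) F = \<tau>(v := - 1) then ising V E J (minf x y) else 0)"
    proof (cases "restrict x F = \<tau>(v := 1) \<and> restrict y F = \<tau>'(v := - 1)")
      case True
      then show ?thesis using restrict_max[OF _ _ le t v, of x y] weight_lattice[OF xy] by auto
    next
      case False
      then show ?thesis using ising_pos by (auto intro!: mult_nonneg_nonneg less_imp_le)
    qed
  qed
qed

lemma q_mono:
  assumes le: "leF F \<tau> \<tau>'" and t: "\<tau> \<in> configs F" "\<tau>' \<in> configs F" and v: "v \<in> F"
  shows "q v \<tau> \<le> q v \<tau>'"
proof -
  have p: "M (\<tau>(v:=1)) > 0" "M (\<tau>(v:=-1)) > 0" "M (\<tau>'(v:=1)) > 0" "M (\<tau>'(v:=-1)) > 0"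
    using Mupd_pos t v by auto
  have k: "M (\<tau>(v:=1)) * M (\<tau>'(v:=-1)) \<le> M (\<tau>'(v:=1)) * M (\<tau>(v:=-1))" by (rule M_key[OF assms])
  have "M (\<tau>(v:=1)) * (M (\<tau>'(v:=1)) + M (\<tau>'(v:=-1))) \<le> M (\<tau>'(v:=1)) * (M (\<tau>(v:=1)) + M (\<tau>(v:=-1)))"
    using k by (simp add: algebra_simps)
  then show ?thesis unfolding q_def using p
    by (simp add: frac_le_eq divide_le_eq le_divide_eq mult.commute)
qed

end



context isetup begin

lemma nbr_set:
  assumes t: "\<tau> \<in> configs F" and v: "v \<in> F"
  shows "{\<tau>'\<in>configs F. \<forall>u\<in>F - {v}. \<tau>' u = \<tau> u} = {\<tau>(v:=1), \<tau>(v:=-1)}"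
proof
  show "{\<tau>'\<in>configs F. \<forall>u\<in>F - {v}. \<tau>' u = \<tau> u} \<subseteq> {\<tau>(v:=1), \<tau>(v:=-1)}"
  proof
    fix \<tau>' assume h: "\<tau>' \<in> {\<tau>'\<in>configs F. \<forall>u\<in>F - {v}. \<tau>' u = \<tau> u}"
    then have t': "\<tau>' \<in> configs F" by simp
    have "\<tau>' = \<tau>(v := \<tau>' v)"
    proof
      fix i show "\<tau>' i = (\<tau>(v := \<tau>' v)) i"
        using h configs_undef[OF t, of i] configs_undef[OF t', of i] by (cases "i \<in> F") auto
    qed
    then show "\<tau>' \<in> {\<tau>(v:=1), \<tau>(v:=-1)}" using configs_val[OF t' v] by (metis insertCI)
  qed
  show "{\<tau>(v:=1), \<tau>(v:=-1)} \<subseteq> {\<tau>'\<in>configs F. \<forall>u\<in>F - {v}. \<tau>' u = \<tau> u}"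
    using configs_upd[OF t v] by auto
qed

lemma Pop_formula:
  assumes t: "\<tau> \<in> configs F"
  shows "Pop g \<tau> = (1 / real (card F)) *
     (\<Sum>v\<in>F. q v \<tau> * g (\<tau>(v:=1)) + (1 - q v \<tau>) * g (\<tau>(v:=-1)))"
proof -
  let ?C = "configs F"
  let ?D = "\<lambda>v. M (\<tau>(v:=1)) + M (\<tau>(v:=-1))"
  let ?A = "\<lambda>v \<tau>'. \<forall>u\<in>F - {v}. \<tau>' u = \<tau> u"
  have fC: "finite ?C" by (rule configs_finite[OF finF])
  have "Pop g \<tau> = (\<Sum>\<tau>'\<in>?C. \<Sum>v\<in>F. (1 / real (card F)) * ((if ?A v \<tau>' then M \<tau>' / ?D v else 0) * g \<tau>'))"
    unfolding Pop_def chain_kernel_def by (simp add: sum_distrib_left sum_distrib_right mult.assoc)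
  also have "\<dots> = (\<Sum>v\<in>F. \<Sum>\<tau>'\<in>?C. (1 / real (card F)) * ((if ?A v \<tau>' then M \<tau>' / ?D v else 0) * g \<tau>'))"
    by (rule sum.swap)
  also have "\<dots> = (1 / real (card F)) * (\<Sum>v\<in>F. \<Sum>\<tau>'\<in>?C. (if ?A v \<tau>' then M \<tau>' / ?D v * g \<tau>' else 0))"
    unfolding sum_distrib_left by (intro sum.cong refl) simp
  also have "\<dots> = (1 / real (card F)) * (\<Sum>v\<in>F. q v \<tau> * g (\<tau>(v:=1)) + (1 - q v \<tau>) * g (\<tau>(v:=-1)))"
  proof -
    have "(\<Sum>\<tau>'\<in>?C. (if ?A v \<tau>' then M \<tau>' / ?D v * g \<tau>' else 0)) = q v \<tau> * g (\<tau>(v:=1)) + (1 - q v \<tau>) * g (\<tau>(v:=-1))"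
      if v: "v \<in> F" for v
    proof -
      have "(\<Sum>\<tau>'\<in>?C. (if ?A v \<tau>' then M \<tau>' / ?D v * g \<tau>' else 0)) = (\<Sum>\<tau>'\<in>{\<tau>'\<in>?C. ?A v \<tau>'}. M \<tau>' / ?D v * g \<tau>')"
        by (rule sum.inter_filter[OF fC, symmetric])
      also have "\<dots> = (\<Sum>\<tau>'\<in>{\<tau>(v:=1), \<tau>(v:=-1)}. M \<tau>' / ?D v * g \<tau>')"
        using nbr_set[OF t v] by simp
      also have "\<dots> = M (\<tau>(v:=1)) / ?D v * g (\<tau>(v:=1)) + M (\<tau>(v:=-1)) / ?D v * g (\<tau>(v:=-1))"
      proof -
        have "\<tau>(v:=1) \<noteq> \<tau>(v:=-1)" by (metis fun_upd_same one_neq_neg_one)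
        then show ?thesis by simp
      qed
      also have "\<dots> = q v \<tau> * g (\<tau>(v:=1)) + (1 - q v \<tau>) * g (\<tau>(v:=-1))"
        by (simp only: one_minus_q[OF t v]) (simp add: q_def)
      finally show ?thesis .
    qed
    then show ?thesis by (simp cong: sum.cong)
  qed
  finally show ?thesis .
qed

end



context isetup begin

definition monoF :: "(('a \<Rightarrow> real) \<Rightarrow> real) \<Rightarrow> bool" where
  "monoF g = (\<forall>\<tau>\<in>configs F. \<forall>\<tau>'\<in>configs F. leF F \<tau> \<tau>' \<longrightarrow> g \<tau> \<le> g \<tau>')"
definition oddF :: "(('a \<Rightarrow> real) \<Rightarrow> real) \<Rightarrow> bool" where
  "oddF g = (\<forall>\<tau>\<in>configs F. g (flipc F \<tau>) = - g \<tau>)"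

lemma Pop_mono: assumes g: "monoF g" shows "monoF (Pop g)"
  unfolding monoF_def
proof (intro ballI impI)
  fix \<tau> \<tau>' assume t: "\<tau> \<in> configs F" and t': "\<tau>' \<in> configs F" and le: "leF F \<tau> \<tau>'"
  have "(\<Sum>v\<in>F. q v \<tau> * g (\<tau>(v:=1)) + (1 - q v \<tau>) * g (\<tau>(v:=-1)))
     \<le> (\<Sum>v\<in>F. q v \<tau>' * g (\<tau>'(v:=1)) + (1 - q v \<tau>') * g (\<tau>'(v:=-1)))"
  proof (rule sum_mono)
    fix v assume v: "v \<in> F"
    let ?q = "q v \<tau>" and ?q' = "q v \<tau>'"
    let ?a = "g (\<tau>(v:=-1))" and ?b = "g (\<tau>(v:=1))" and ?a' = "g (\<tau>'(v:=-1))" and ?b' = "g (\<tau>'(v:=1))"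
    have c: "\<tau>(v:=s) \<in> configs F" "\<tau>'(v:=s) \<in> configs F" if "s \<in> {-1,1}" for s
      using configs_upd[OF t v that] configs_upd[OF t' v that] by auto
    have "leF F (\<tau>(v:=-1)) (\<tau>(v:=1))" unfolding leF_def by auto
    then have ab: "?a \<le> ?b" using g c unfolding monoF_def by simp
    have "leF F (\<tau>(v:=s)) (\<tau>'(v:=s))" for s using le unfolding leF_def by auto
    then have aa: "?a \<le> ?a'" and bb: "?b \<le> ?b'" using g c unfolding monoF_def by auto
    have qq: "?q \<le> ?q'" by (rule q_mono[OF le t t' v])
    have q0: "0 \<le> ?q" "?q' \<le> 1" using q_bounds[OF t v] q_bounds[OF t' v] by auto
    have p1: "(?q' - ?q) * (?b - ?a) \<ge> 0" using qq ab by simp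
    have p2: "?q' * (?b' - ?b) \<ge> 0" using q0 qq bb by simp
    have p3: "(1 - ?q') * (?a' - ?a) \<ge> 0" using q0 aa by simp
    have e1: "?q * ?b + (1 - ?q) * ?a = ?q' * ?b + (1 - ?q') * ?a - (?q' - ?q) * (?b - ?a)"
      by (simp add: algebra_simps)
    have e2: "?q' * ?b' + (1 - ?q') * ?a' = ?q' * ?b + (1 - ?q') * ?a + ?q' * (?b' - ?b) + (1 - ?q') * (?a' - ?a)"
      by (simp add: algebra_simps)
    show "?q * ?b + (1 - ?q) * ?a \<le> ?q' * ?b' + (1 - ?q') * ?a'"
      unfolding e1 e2 using p1 p2 p3 by linarith
  qed
  then show "Pop g \<tau> \<le> Pop g \<tau>'"
    unfolding Pop_formula[OF t] Pop_formula[OF t'] by (intro mult_left_mono) auto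
qed

lemma Pop_odd: assumes g: "oddF g" shows "oddF (Pop g)"
  unfolding oddF_def
proof
  fix \<tau> assume t: "\<tau> \<in> configs F"
  have ft: "flipc F \<tau> \<in> configs F" by (rule flipc_configs[OF t])
  have "(\<Sum>v\<in>F. q v (flipc F \<tau>) * g ((flipc F \<tau>)(v:=1)) + (1 - q v (flipc F \<tau>)) * g ((flipc F \<tau>)(v:=-1)))
      = (\<Sum>v\<in>F. - (q v \<tau> * g (\<tau>(v:=1)) + (1 - q v \<tau>) * g (\<tau>(v:=-1))))"
  proof (rule sum.cong[OF refl])
    fix v assume v: "v \<in> F"
    have c: "\<tau>(v:=s) \<in> configs F" if "s \<in> {-1,1}" for s using configs_upd[OF t v that] .
    have g1: "g ((flipc F \<tau>)(v:=1)) = - g (\<tau>(v:=-1))"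
      using flipc_upd[OF v, of \<tau> 1] g c[of "-1"] unfolding oddF_def by simp
    have g2: "g ((flipc F \<tau>)(v:=-1)) = - g (\<tau>(v:=1))"
      using flipc_upd[OF v, of \<tau> "-1"] g c[of "1"] unfolding oddF_def by simp
    show "q v (flipc F \<tau>) * g ((flipc F \<tau>)(v:=1)) + (1 - q v (flipc F \<tau>)) * g ((flipc F \<tau>)(v:=-1))
        = - (q v \<tau> * g (\<tau>(v:=1)) + (1 - q v \<tau>) * g (\<tau>(v:=-1)))"
      unfolding g1 g2 q_flip[OF t v] by (simp add: algebra_simps)
  qed
  also have "\<dots> = - (\<Sum>v\<in>F. q v \<tau> * g (\<tau>(v:=1)) + (1 - q v \<tau>) * g (\<tau>(v:=-1)))"
    by (rule sum_negf)
  finally show "Pop g (flipc F \<tau>) = - Pop g \<tau>"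
    unfolding Pop_formula[OF t] Pop_formula[OF ft] by simp
qed

lemma Pop_lin: "Pop (\<lambda>\<tau>. a * g \<tau> + b * h \<tau>) = (\<lambda>\<tau>. a * Pop g \<tau> + b * Pop h \<tau>)"
  unfolding Pop_def by (simp add: sum.distrib sum_distrib_left algebra_simps)

lemma Pop_cong: "(\<forall>\<tau>\<in>configs F. g \<tau> = h \<tau>) \<Longrightarrow> Pop g = Pop h"
  unfolding Pop_def by (intro ext sum.cong) auto

lemma iter_mono: "monoF g \<Longrightarrow> monoF ((Pop^^t) g)"
  by (induction t) (auto intro: Pop_mono)

lemma iter_odd: "oddF g \<Longrightarrow> oddF ((Pop^^t) g)"
  by (induction t) (auto intro: Pop_odd)

lemma iter_lin: "(Pop^^t) (\<lambda>\<tau>. a * g \<tau> + b * h \<tau>) = (\<lambda>\<tau>. a * (Pop^^t) g \<tau> + b * (Pop^^t) h \<tau>)"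
  by (induction t) (simp_all add: Pop_lin)

lemma iter_cong: "(\<forall>\<tau>\<in>configs F. g \<tau> = h \<tau>) \<Longrightarrow> \<forall>\<tau>\<in>configs F. (Pop^^t) g \<tau> = (Pop^^t) h \<tau>"
  by (induction t) (auto dest: Pop_cong)

abbreviation "plusc \<equiv> restrict (\<lambda>_. 1::real) F"

lemma plusc_configs: "plusc \<in> configs F" unfolding configs_def by auto

lemma law: "(\<Sum>\<tau>\<in>configs F. chain_law V E J F t \<tau> * g \<tau>) = (Pop^^t) g plusc"
proof (induction t arbitrary: g)
  case 0
  have "(\<Sum>\<tau>\<in>configs F. chain_law V E J F 0 \<tau> * g \<tau>) = (\<Sum>\<tau>\<in>configs F. if \<tau> = plusc then g \<tau> else 0)"
    by (intro sum.cong) auto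
  also have "\<dots> = g plusc" using plusc_configs configs_finite[OF finF] by (simp add: sum.delta')
  also have "\<dots> = (Pop^^0) g plusc" by simp
  finally show ?case .
next
  case (Suc t)
  have "(\<Sum>\<tau>'\<in>configs F. chain_law V E J F (Suc t) \<tau>' * g \<tau>')
      = (\<Sum>\<tau>'\<in>configs F. \<Sum>\<tau>\<in>configs F. chain_law V E J F t \<tau> * (chain_kernel V E J F \<tau> \<tau>' * g \<tau>'))"
    by (simp add: sum_distrib_right mult.assoc)
  also have "\<dots> = (\<Sum>\<tau>\<in>configs F. \<Sum>\<tau>'\<in>configs F. chain_law V E J F t \<tau> * (chain_kernel V E J F \<tau> \<tau>' * g \<tau>'))"
    by (rule sum.swap)
  also have "\<dots> = (\<Sum>\<tau>\<in>configs F. chain_law V E J F t \<tau> * Pop g \<tau>)"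
    unfolding Pop_def by (simp add: sum_distrib_left)
  also have "\<dots> = (Pop^^t) (Pop g) plusc" by (rule Suc.IH)
  also have "\<dots> = (Pop^^Suc t) g plusc" by (simp add: funpow_Suc_right del: funpow.simps)
  finally show ?case .
qed

definition mf :: "('a \<Rightarrow> real) \<Rightarrow> real" where "mf \<tau> = (\<Sum>v\<in>F. 2 * q v \<tau> - 1)"
definition ff :: "('a \<Rightarrow> real) \<Rightarrow> real" where "ff \<tau> = (\<Sum>v\<in>F. \<tau> v)"

lemma mf_mono: "monoF mf"
  unfolding monoF_def mf_def by (auto intro!: sum_mono q_mono)

lemma mf_odd: "oddF mf"
  unfolding oddF_def mf_def by (auto simp: q_flip sum_negf[symmetric] intro!: sum.cong)

lemma ff_upd: "v \<in> F \<Longrightarrow> ff (\<tau>(v:=s)) = ff \<tau> - \<tau> v + s"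
  unfolding ff_def
  using sum.remove[OF finF, of v "\<tau>(v:=s)"] sum.remove[OF finF, of v \<tau>] by simp

lemma Pop_ff:
  assumes t: "\<tau> \<in> configs F" and ne: "F \<noteq> {}"
  shows "Pop ff \<tau> = (1 - 1 / real (card F)) * ff \<tau> + (1 / real (card F)) * mf \<tau>"
proof -
  have c0: "card F > 0" using ne finF card_gt_0_iff by blast
  then have k: "real (card F) > 0" by simp
  have "(\<Sum>v\<in>F. q v \<tau> * ff (\<tau>(v:=1)) + (1 - q v \<tau>) * ff (\<tau>(v:=-1)))
      = (\<Sum>v\<in>F. ff \<tau> + ((2 * q v \<tau> - 1) - \<tau> v))"
    by (intro sum.cong refl) (simp add: ff_upd algebra_simps)
  also have "\<dots> = real (card F) * ff \<tau> + mf \<tau> - ff \<tau>"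
    by (simp add: sum.distrib sum_subtractf mf_def ff_def)
  finally show ?thesis unfolding Pop_formula[OF t] using k by (simp add: field_simps)
qed

lemma mf_nonneg: "(Pop^^t) mf plusc \<ge> 0"
proof -
  let ?h = "(Pop^^t) mf"
  have m: "monoF ?h" by (rule iter_mono[OF mf_mono])
  have o: "oddF ?h" by (rule iter_odd[OF mf_odd])
  have fp: "flipc F plusc \<in> configs F" by (rule flipc_configs[OF plusc_configs])
  have "leF F (flipc F plusc) plusc" unfolding leF_def flipc_def by auto
  then have "?h (flipc F plusc) \<le> ?h plusc" using m fp plusc_configs unfolding monoF_def by blast
  moreover have "?h (flipc F plusc) = - ?h plusc" using o plusc_configs unfolding oddF_def by blast
  ultimately show ?thesis by linarith
qed

lemma main_ineq:
  assumes ne: "F \<noteq> {}"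
  shows "(Pop^^t) ff plusc \<ge> real (card F) * (1 - 1 / real (card F)) ^ t"
proof (induction t)
  case 0
  show ?case by (simp add: ff_def)
next
  case (Suc t)
  have c0: "card F \<ge> 1" using ne finF card_gt_0_iff by (metis One_nat_def Suc_leI)
  then have k: "real (card F) \<ge> 1" by simp
  let ?k = "real (card F)"
  have "(Pop^^Suc t) ff plusc = (Pop^^t) (Pop ff) plusc"
    by (simp add: funpow_Suc_right del: funpow.simps)
  also have "\<dots> = (Pop^^t) (\<lambda>\<tau>. (1 - 1/?k) * ff \<tau> + (1/?k) * mf \<tau>) plusc"
    using iter_cong[of "Pop ff" "\<lambda>\<tau>. (1 - 1/?k) * ff \<tau> + (1/?k) * mf \<tau>" t] Pop_ff[OF _ ne] plusc_configs
    by blast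
  also have "\<dots> = (1 - 1/?k) * (Pop^^t) ff plusc + (1/?k) * (Pop^^t) mf plusc"
    by (simp only: iter_lin)
  also have "\<dots> \<ge> (1 - 1/?k) * (?k * (1 - 1/?k) ^ t)"
  proof -
    have a: "1 - 1/?k \<ge> 0" using k by simp
    have "(1 - 1/?k) * (?k * (1 - 1/?k) ^ t) \<le> (1 - 1/?k) * (Pop^^t) ff plusc"
      by (rule mult_left_mono[OF Suc.IH a])
    moreover have "(1/?k) * (Pop^^t) mf plusc \<ge> 0" using mf_nonneg k by simp
    ultimately show ?thesis by linarith
  qed
  finally have "(Pop^^Suc t) ff plusc \<ge> (1 - 1/?k) * (?k * (1 - 1/?k) ^ t)" .
  moreover have "?k * (1 - 1/?k) ^ Suc t = (1 - 1/?k) * (?k * (1 - 1/?k) ^ t)" by (simp add: mult_ac)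
  ultimately show ?case by linarith
qed

end



theorem lemma2p5:
  fixes V :: "'a set" and E :: "'a set set" and J :: "'a set \<Rightarrow> real"
    and F :: "'a set" and n :: nat and t :: nat
  assumes "finite V" and "card V = n"
    and "\<forall>e\<in>E. \<exists>u v. u \<in> V \<and> v \<in> V \<and> u \<noteq> v \<and> e = {u, v}"
    and "\<forall>e\<in>E. J e \<ge> 0"
    and "F \<subseteq> V"
    and "card F = nat \<lfloor>sqrt (real n) / ln (real n)\<rfloor>"
    and "(\<Sum>u\<in>F. \<Sum>v\<in>F - {u}. ising_cov V E J u v) \<le> 2 / ln (real n)"
  shows "exp_mag_plus V E J F t \<ge> real (card F) * (1 - 1 / real (card F)) ^ t"
proof (cases "F = {}")
  case True
  then show ?thesis by (simp add: exp_mag_plus_def)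
next
  case False
  interpret isetup V E J F using assms by unfold_locales auto
  have "exp_mag_plus V E J F t = (Pop^^t) ff plusc"
    unfolding exp_mag_plus_def ff_def[symmetric] by (rule law)
  then show ?thesis using main_ineq[OF False] by simp
qed


end
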